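(* Let $H\subset\mathbb{R}^n$ be a bounded domain and let $u_1,u_2\in C^2(H)\cap C(\overline H)$ be bounded functions with $D_{H,\varphi}u_1\le D_{H,\varphi}u_2$ in $H$ and $u_1=u_2=\varphi$ on $\partial H$. Then $u_1\le u_2$ in $H$.
   Context: For an open set $H\subset\mathbb{R}^n$, a function $\varphi$ on $\partial H$ and $u$ on $\overline H$ with $u=\varphi$ on $\partial H$, let $v$ be the bounded harmonic function in $\Omega=H\times(0,\infty)$, continuous up to the boundary, with $v(x,0)=u(x)$ for $x\in H$ and $v(x,\lambda)=\varphi(x)$ on $\partial H\times[0,\infty)$. Define $D_{H,\varphi}u(x):=-\partial_\lambda v(x,0)$ for $x\in H$. *)

theory Defs
  imports "HOL-Analysis.Analysis"
begin

definition C2_with :: "'a::euclidean_space set \<Rightarrow> ('a \<Rightarrow> real) \<Rightarrow> ('a \<Rightarrow> 'a \<Rightarrow>\<^sub>L real)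
    \<Rightarrow> ('a \<Rightarrow> 'a \<Rightarrow>\<^sub>L ('a \<Rightarrow>\<^sub>L real)) \<Rightarrow> bool" where
  "C2_with S f f' f'' \<longleftrightarrow>
     (\<forall>z\<in>S. (f has_derivative blinfun_apply (f' z)) (at z)
           \<and> (f' has_derivative blinfun_apply (f'' z)) (at z))
     \<and> continuous_on S f''"

definition C2_on :: "'a::euclidean_space set \<Rightarrow> ('a \<Rightarrow> real) \<Rightarrow> bool" where
  "C2_on S f \<longleftrightarrow> (\<exists>f' f''. C2_with S f f' f'')"

definition harmonic_on :: "'a::euclidean_space set \<Rightarrow> ('a \<Rightarrow> real) \<Rightarrow> bool" where
  "harmonic_on S f \<longleftrightarrow> open S \<and> (\<exists>f' f''. C2_with S f f' f'' \<and>
      (\<forall>z\<in>S. (\<Sum>b\<in>Basis. blinfun_apply (blinfun_apply (f'' z) b) b) = 0))"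

definition harmonic_ext :: "'a::euclidean_space set \<Rightarrow> ('a \<Rightarrow> real) \<Rightarrow> ('a \<Rightarrow> real)
    \<Rightarrow> ('a \<times> real \<Rightarrow> real) \<Rightarrow> bool" where
  "harmonic_ext H \<phi> u v \<longleftrightarrow>
     harmonic_on (H \<times> {0<..}) v
     \<and> bounded (v ` (H \<times> {0<..}))
     \<and> continuous_on (closure (H \<times> {0<..})) v
     \<and> (\<forall>x\<in>H. v (x, 0) = u x)
     \<and> (\<forall>x\<in>frontier H. \<forall>s\<ge>0. v (x, s) = \<phi> x)"

text \<open>DtN_has H phi u x d  means  D_{H,phi} u (x) = d, i.e. d = - d/d lambda v(x,0)
  (one-sided derivative at lambda = 0) for the harmonic extension v.\<close>
definition DtN_has :: "'a::euclidean_space set \<Rightarrow> ('a \<Rightarrow> real) \<Rightarrow> ('a \<Rightarrow> real)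
    \<Rightarrow> 'a \<Rightarrow> real \<Rightarrow> bool" where
  "DtN_has H \<phi> u x d \<longleftrightarrow>
     (\<exists>v. harmonic_ext H \<phi> u v \<and>
          ((\<lambda>t. v (x, t)) has_real_derivative (- d)) (at 0 within {0..}))"

end

theory Submission
  imports Defs
begin


lemma second_deriv_min:
  fixes g g' :: "real \<Rightarrow> real"
  assumes r: "r > 0"
    and d1: "\<And>t. \<bar>t\<bar> < r \<Longrightarrow> (g has_real_derivative g' t) (at t)"
    and d2: "(g' has_real_derivative D) (at 0)"
    and mn: "\<And>t. \<bar>t\<bar> < r \<Longrightarrow> g 0 \<le> g t"
  shows "D \<ge> 0"
proof (rule ccontr)
  assume "\<not> D \<ge> 0" hence D: "D < 0" by simp
  have g0: "g' 0 = 0"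
    using DERIV_local_min[OF d1[of 0] r] mn r by auto
  have "(\<lambda>h. (g' (0 + h) - g' 0) / h) \<midarrow>0\<rightarrow> D" using d2 DERIV_def by blast
  hence "\<forall>\<^sub>F h in at 0. (g' (0 + h) - g' 0) / h < 0"
    using D by (auto dest: order_tendstoD)
  then obtain \<eta> where eta: "\<eta> > 0" "\<And>h. h \<noteq> 0 \<Longrightarrow> dist h 0 < \<eta> \<Longrightarrow> g' h / h < 0"
    using g0 by (auto simp: eventually_at)
  define b where "b = min \<eta> r / 2"
  have b: "0 < b" "b < \<eta>" "b < r" using eta r by (auto simp: b_def)
  have "g 0 > g b"
  proof (rule DERIV_neg_imp_decreasing_open[OF b(1)])
    fix x assume x: "0 < x" "x < b"
    have "g' x / x < 0" using eta(2)[of x] x b by auto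
    hence "g' x < 0" using x by (simp add: divide_less_0_iff)
    thus "\<exists>y. DERIV g x :> y \<and> y < 0" using d1[of x] x b by auto
  next
    show "continuous_on {0..b} g"
      by (rule DERIV_continuous_on[where D=g']) (use d1 b in \<open>auto intro: has_field_derivative_at_within\<close>)
  qed
  moreover have "g 0 \<le> g b" using mn[of b] b by auto
  ultimately show False by simp
qed

lemma onesided_neg:
  fixes f :: "real \<Rightarrow> real"
  assumes "(f has_real_derivative D) (at 0 within {0..})" "D < 0" "r > 0"
  shows "\<exists>t. 0 < t \<and> t < r \<and> f t < f 0"
proof -
  have "((\<lambda>y. (f y - f 0) / (y - 0)) \<longlongrightarrow> D) (at 0 within {0..})"
    using assms(1) has_field_derivative_iff by blast
  hence "\<forall>\<^sub>F y in at 0 within {0..}. (f y - f 0) / (y - 0) < 0"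
    using assms(2) by (auto dest: order_tendstoD)
  then obtain d where d: "d > 0" "\<And>y. y \<in> {0..} \<Longrightarrow> y \<noteq> 0 \<Longrightarrow> dist y 0 < d \<Longrightarrow> (f y - f 0) / (y - 0) < 0"
    by (auto simp: eventually_at)
  define t where "t = min d r / 2"
  have t: "0 < t" "t < d" "t < r" using d assms by (auto simp: t_def)
  have "(f t - f 0) / t < 0" using d(2)[of t] t by auto
  hence "f t < f 0" using t by (simp add: divide_less_0_iff)
  thus ?thesis using t by auto
qed



lemma line_comp:
  fixes f :: "'a::real_normed_vector \<Rightarrow> real"
  assumes "(f has_derivative F) (at (p + t *\<^sub>R b))"
  shows "((\<lambda>s. f (p + s *\<^sub>R b)) has_real_derivative F b) (at t)"
proof -
  have l: "((\<lambda>s. p + s *\<^sub>R b) has_derivative (\<lambda>s. s *\<^sub>R b)) (at t)"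
    by (auto intro!: derivative_eq_intros)
  have "((\<lambda>s. f (p + s *\<^sub>R b)) has_derivative (\<lambda>s. F (s *\<^sub>R b))) (at t)"
    using has_derivative_compose[OF l assms] by (simp add: o_def)
  moreover have "linear F" using assms has_derivative_linear by blast
  ultimately have "((\<lambda>s. f (p + s *\<^sub>R b)) has_derivative (\<lambda>s. F b * s)) (at t)"
    by (simp add: linear_cmul mult.commute)
  moreover have "(\<lambda>s. F b * s) = (*) (F b)" by auto
  ultimately show ?thesis by (simp add: has_field_derivative_def)
qed

lemma z_line_deriv:
  fixes w :: "'a::euclidean_space \<times> real \<Rightarrow> real"
  assumes "(w has_derivative W) (at (p + t *\<^sub>R b))"
  shows "((\<lambda>s. w (p + s *\<^sub>R b) + \<delta> * snd (p + s *\<^sub>R b) + \<epsilon> * (- ((norm (fst (p + s *\<^sub>R b))) ^ 2) + exp (- snd (p + s *\<^sub>R b)))) has_real_derivative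
     (W b + \<delta> * snd b + \<epsilon> * (-(2 * inner (fst p) (fst b) + 2*t*inner (fst b) (fst b)) - snd b * exp (-(snd p + t * snd b))))) (at t)"
proof -
  have e: "(\<lambda>s. w (p + s *\<^sub>R b) + \<delta> * snd (p + s *\<^sub>R b) + \<epsilon> * (- ((norm (fst (p + s *\<^sub>R b))) ^ 2) + exp (- snd (p + s *\<^sub>R b))))
    = (\<lambda>s. w (p + s *\<^sub>R b) + \<delta> * (snd p + s * snd b) + \<epsilon> * (-(inner (fst p) (fst p) + 2 * s * inner (fst p) (fst b) + s ^ 2 * inner (fst b) (fst b)) + exp (-(snd p + s * snd b))))"
    unfolding power2_norm_eq_inner by (rule ext) (simp add: inner_add inner_commute algebra_simps power2_eq_square)
  show ?thesis unfolding e
    by (rule derivative_eq_intros line_comp[OF assms] refl | simp)+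
qed

lemma z_line_deriv2:
  fixes W1 :: "'a::euclidean_space \<times> real \<Rightarrow> ('a \<times> real) \<Rightarrow> real"
  assumes "((\<lambda>y. W1 y b) has_derivative W2) (at p)"
  shows "((\<lambda>t. W1 (p + t *\<^sub>R b) b + \<delta> * snd b + \<epsilon> * (-(2 * inner (fst p) (fst b) + 2*t*inner (fst b) (fst b)) - snd b * exp (-(snd p + t * snd b)))) has_real_derivative
     (W2 b + \<epsilon> * (- 2*inner (fst b) (fst b) + (snd b) ^ 2 * exp (- snd p)))) (at 0)"
proof -
  have a: "((\<lambda>y. W1 y b) has_derivative W2) (at (p + 0 *\<^sub>R b))" using assms by simp
  show ?thesis
    by (rule derivative_eq_intros line_comp[OF a] refl | simp)+ (simp add: algebra_simps power2_eq_square)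
qed



lemma sum_Basis_prod_real:
  fixes f :: "'a::euclidean_space \<times> real \<Rightarrow> real"
  shows "sum f Basis = (\<Sum>i\<in>Basis. f (i, 0)) + f (0, 1)"
proof -
  have "inj_on (\<lambda>u. (u::'a, 0::real)) Basis" "inj_on (\<lambda>u. (0::'a, u::real)) Basis"
    by (auto intro!: inj_onI Pair_inject)
  thus ?thesis
    unfolding Basis_prod_def
    by (subst sum.union_disjoint) (auto simp: Basis_prod_def sum.reindex)
qed

lemma lap_h:
  fixes W2 :: "'a::euclidean_space \<times> real \<Rightarrow> 'a \<times> real \<Rightarrow> real"
  assumes "(\<Sum>b\<in>Basis. W2 b b) = 0"
  shows "(\<Sum>b\<in>(Basis::('a\<times>real) set). W2 b b + \<epsilon> * (- 2*inner (fst b) (fst b) + (snd b)^2 * exp (- l)))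
     = \<epsilon> * (- 2 * real DIM('a) + exp (- l))"
proof -
  have "(\<Sum>b\<in>(Basis::('a\<times>real) set). W2 b b + \<epsilon> * (- 2*inner (fst b) (fst b) + (snd b)^2 * exp (- l)))
     = (\<Sum>b\<in>Basis. W2 b b) + (\<Sum>b\<in>(Basis::('a\<times>real) set). \<epsilon> * (- 2*inner (fst b) (fst b) + (snd b)^2 * exp (- l)))"
    by (simp add: sum.distrib)
  also have "(\<Sum>b\<in>(Basis::('a\<times>real) set). \<epsilon> * (- 2*inner (fst b) (fst b) + (snd b)^2 * exp (- l)))
     = (\<Sum>i\<in>(Basis::'a set). \<epsilon> * (- 2)) + \<epsilon> * exp (- l)"
    by (subst sum_Basis_prod_real) simp
  finally show ?thesis using assms by (simp add: algebra_simps)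
qed


lemma bot_deriv:
  fixes w :: "'a::euclidean_space \<times> real \<Rightarrow> real"
  assumes "((\<lambda>t. w (xq,t)) has_real_derivative D) (at 0 within {0..})"
  shows "((\<lambda>t. w (xq,t) + \<delta> * t + \<epsilon> * (- (norm xq ^ 2) + exp (- t))) has_real_derivative
                (D + \<delta> + \<epsilon> * (- 1))) (at 0 within {0..})"
proof -
  have e: "((\<lambda>t. exp (- t)) has_real_derivative (- 1)) (at 0 within {0..})"
    by (auto intro!: derivative_eq_intros)
  have e2: "((\<lambda>t. - (norm xq ^ 2) + exp (- t)) has_real_derivative (0 + - 1)) (at 0 within {0..})"
    by (rule DERIV_add[OF DERIV_const e])
  have e3: "((\<lambda>t. \<delta> * t) has_real_derivative \<delta>) (at 0 within {0..})"
    using DERIV_cmult[OF DERIV_ident, of \<delta>] by simp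
  show ?thesis
    using DERIV_add[OF DERIV_add[OF assms e3] DERIV_cmult[OF e2, of \<epsilon>]] by simp
qed


lemma small_nonneg:
  fixes a C :: real
  assumes "C > 0" "\<And>e. e > 0 \<Longrightarrow> a \<ge> - e * C"
  shows "a \<ge> 0"
proof (rule ccontr)
  assume "\<not> a \<ge> 0"
  hence a: "a < 0" by simp
  have pos: "- a / (2*C) > 0" using a assms(1) by (simp add: divide_neg_pos)
  have "a \<ge> - (- a / (2*C)) * C" using assms(2)[OF pos] by simp
  thus False using a assms(1) by (simp add: field_simps)
qed

lemma MP:
  fixes H :: "'a::euclidean_space set" and w :: "'a \<times> real \<Rightarrow> real"
  assumes openH: "open H" and bH: "bounded H"
   and d1: "\<forall>z\<in>H \<times> {0<..}. (w has_derivative W1 z) (at z)"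
   and d2: "\<forall>z\<in>H \<times> {0<..}. \<forall>b\<in>Basis. ((\<lambda>y. W1 y b) has_derivative W2 z b) (at z)"
   and lap: "\<forall>z\<in>H \<times> {0<..}. (\<Sum>b\<in>Basis. W2 z b b) = 0"
   and bd: "bounded (w ` (H \<times> {0<..}))"
   and cont: "continuous_on (closure (H \<times> {0<..})) w"
   and lat: "\<forall>x\<in>frontier H. \<forall>s\<ge>0. w (x,s) \<ge> 0"
   and bot: "\<forall>x\<in>H. w (x,0) \<ge> 0 \<or> (\<exists>D\<le>0. ((\<lambda>t. w (x,t)) has_real_derivative D) (at 0 within {0..}))"
  shows "\<forall>x\<in>H. \<forall>s\<ge>0. w (x,s) \<ge> 0"
proof -
  have clO: "closure (H \<times> {0<..}) = closure H \<times> {0::real..}"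
    by (simp add: closure_Times)
  obtain M where M0: "\<forall>y\<in>H \<times> {0<..}. norm (w y) \<le> M"
    using bd by (auto simp: bounded_iff)
  have "w ` closure (H \<times> {0<..}) \<subseteq> cball 0 M"
    by (rule image_closure_subset[OF cont]) (use M0 in auto)
  hence M: "\<And>y. y \<in> closure H \<times> {0..} \<Longrightarrow> \<bar>w y\<bar> \<le> M"
    using clO by (metis image_subset_iff mem_cball_0 real_norm_def)
  obtain B where B: "\<And>x. x \<in> closure H \<Longrightarrow> norm x \<le> B"
    using bounded_closure[OF bH] by (auto simp: bounded_iff)
  have B2: "norm x ^ 2 \<le> B ^ 2" if "x \<in> closure H" for x
    using B[OF that] by (simp add: power_mono)
  have fr: "x \<in> frontier H" if "x \<in> closure H" "x \<notin> H" for x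
    using that openH by (simp add: frontier_def interior_open)
  show ?thesis
  proof (intro ballI allI impI)
    fix x0 s0 assume x0: "x0 \<in> H" and s0: "(s0::real) \<ge> 0"
    show "w (x0, s0) \<ge> 0"
    proof (rule small_nonneg[where C = "B^2 + s0 + 1"])
      show "B^2 + s0 + 1 > 0" using s0 by (simp add: add_nonneg_pos)
    next
      fix \<epsilon> :: real assume ep: "\<epsilon> > 0"
      define \<delta> where "\<delta> = \<epsilon> / 2"
      have dp: "\<delta> > 0" "\<delta> < \<epsilon>" using ep by (auto simp: \<delta>_def)
      define z where "z y = w y + \<delta> * snd y + \<epsilon> * (- ((norm (fst y)) ^ 2) + exp (- snd y))" for y
      define R where "R = max (s0 + 1) (2 * M / \<epsilon> + 1)"
      have R: "R > 0" "s0 < R" "\<delta> * R \<ge> M"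
      proof -
        show "R > 0" "s0 < R" using s0 by (auto simp: R_def)
        have "R \<ge> 2 * M / \<epsilon>" by (simp add: R_def)
        hence "\<epsilon> * R \<ge> 2 * M" using ep by (simp add: field_simps)
        thus "\<delta> * R \<ge> M" by (simp add: \<delta>_def)
      qed
      define K where "K = closure H \<times> {0..R}"
      have Ksub: "K \<subseteq> closure H \<times> {0..}" by (auto simp: K_def)
      have Kc: "compact K" unfolding K_def
        by (intro compact_Times compact_closure[THEN iffD2] bH compact_Icc)
      have Kne: "K \<noteq> {}" using x0 R closure_subset by (auto simp: K_def)
      have zc: "continuous_on K z"
      proof -
        have "continuous_on K w" using cont clO Ksub continuous_on_subset by metis
        thus ?thesis unfolding z_def by (intro continuous_intros) auto
      qed
      obtain q where qK: "q \<in> K" and qmin: "\<And>y. y \<in> K \<Longrightarrow> z q \<le> z y"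
        using continuous_attains_inf[OF Kc Kne zc] by blast
      obtain xq lq where q: "q = (xq, lq)" by (cases q)
      have xq: "xq \<in> closure H" and lq: "0 \<le> lq" "lq \<le> R" using qK q by (auto simp: K_def)
      have zq: "z q \<ge> - \<epsilon> * B^2"
      proof -
        have nb: "\<epsilon> * (- (norm xq ^ 2) + exp (- lq)) \<ge> - \<epsilon> * B^2"
        proof -
          have "- (norm xq ^ 2) + exp (- lq) \<ge> - (B^2)" using B2[OF xq] exp_gt_zero[of "- lq"] by linarith
          hence "\<epsilon> * (- (B^2)) \<le> \<epsilon> * (- (norm xq ^ 2) + exp (- lq))" using ep by (intro mult_left_mono) auto
          thus ?thesis by simp
        qed
        have zq_eq: "z q = w q + \<delta> * lq + \<epsilon> * (- (norm xq ^ 2) + exp (- lq))"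
          by (simp add: z_def q)
        consider "xq \<notin> H" | "xq \<in> H" "lq = R" | "xq \<in> H" "lq = 0" | "xq \<in> H" "0 < lq" "lq < R"
          using lq by force
        thus ?thesis
        proof cases
          case 1
          hence "w q \<ge> 0" using lat fr[OF xq] lq q by auto
          moreover have "\<delta> * lq \<ge> 0" using dp lq by simp
          ultimately show ?thesis using zq_eq nb by linarith
        next
          case 2
          have "\<bar>w q\<bar> \<le> M" using M qK Ksub by auto
          thus ?thesis using zq_eq nb R 2 by simp
        next
          case 3
          then consider "w (xq, 0) \<ge> 0" | D where "D \<le> 0" "((\<lambda>t. w (xq,t)) has_real_derivative D) (at 0 within {0..})"
            using bot by auto
          thus ?thesis
          proof cases
            case 1
            thus ?thesis using zq_eq nb dp 3 q by simp
          next
            case (2 D)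
            have "((\<lambda>t. w (xq,t) + \<delta> * t + \<epsilon> * (- (norm xq ^ 2) + exp (- t))) has_real_derivative
                (D + \<delta> + \<epsilon> * (- 1))) (at 0 within {0..})"
              by (rule bot_deriv[OF 2(2)])
            moreover have "D + \<delta> + \<epsilon> * (- 1) < 0" using 2(1) dp by simp
            ultimately obtain t where t: "0 < t" "t < R"
              "w (xq,t) + \<delta> * t + \<epsilon> * (- (norm xq ^ 2) + exp (- t)) < w (xq,0) + \<delta> * 0 + \<epsilon> * (- (norm xq ^ 2) + exp (- 0))"
              using onesided_neg[OF _ _ R(1)] by blast
            have "z q \<le> z (xq, t)" using qmin[of "(xq,t)"] t xq by (auto simp: K_def)
            thus ?thesis using t(3) 3 q by (simp add: z_def)
          qed
        next
          case 4
          have qU: "q \<in> H \<times> {0<..<R}" using 4 q by auto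
          have oU: "open (H \<times> {0<..<R})" using openH by (simp add: open_Times)
          obtain r where r: "r > 0" "ball q r \<subseteq> H \<times> {0<..<R}"
            using open_contains_ball[THEN iffD1, OF oU] qU by blast
          have UK: "H \<times> {0<..<R} \<subseteq> K" using closure_subset by (auto simp: K_def)
          have UO: "H \<times> {0<..<R} \<subseteq> H \<times> {0<..}" by auto
          have qO: "q \<in> H \<times> {0<..}" using qU by auto
          have nonneg: "W2 q b b + \<epsilon> * (- 2*inner (fst b) (fst b) + (snd b)^2 * exp (- snd q)) \<ge> 0"
            if b: "b \<in> Basis" for b
          proof (rule second_deriv_min[OF r(1)])
            fix t :: real assume t: "\<bar>t\<bar> < r"
            have inb: "q + t *\<^sub>R b \<in> ball q r" using t b by (simp add: dist_norm)
            hence inO: "q + t *\<^sub>R b \<in> H \<times> {0<..}" using r UO by auto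
            show "((\<lambda>s. z (q + s *\<^sub>R b)) has_real_derivative
              (W1 (q + t *\<^sub>R b) b + \<delta> * snd b + \<epsilon> * (-(2 * inner (fst q) (fst b) + 2*t*inner (fst b) (fst b)) - snd b * exp (-(snd q + t * snd b))))) (at t)"
              unfolding z_def using z_line_deriv[OF d1[rule_format, OF inO]] by simp
            show "z (q + 0 *\<^sub>R b) \<le> z (q + t *\<^sub>R b)"
            proof -
              have "q + t *\<^sub>R b \<in> K" using inb r UK by blast
              thus ?thesis using qmin by simp
            qed
          next
            show "((\<lambda>t. W1 (q + t *\<^sub>R b) b + \<delta> * snd b + \<epsilon> * (-(2 * inner (fst q) (fst b) + 2*t*inner (fst b) (fst b)) - snd b * exp (-(snd q + t * snd b)))) has_real_derivative
              (W2 q b b + \<epsilon> * (- 2*inner (fst b) (fst b) + (snd b)^2 * exp (- snd q)))) (at 0)"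
              using z_line_deriv2[where ?W1.0=W1 and b=b, OF d2[rule_format, OF qO b]] by simp
          qed
          have "(\<Sum>b\<in>(Basis::('a\<times>real) set). W2 q b b + \<epsilon> * (- 2*inner (fst b) (fst b) + (snd b)^2 * exp (- snd q))) \<ge> 0"
            by (rule sum_nonneg) (use nonneg in auto)
          moreover have "(\<Sum>b\<in>(Basis::('a\<times>real) set). W2 q b b + \<epsilon> * (- 2*inner (fst b) (fst b) + (snd b)^2 * exp (- snd q)))
             = \<epsilon> * (- 2 * real DIM('a) + exp (- snd q))"
            by (rule lap_h) (use lap qO in auto)
          moreover have "exp (- snd q) < 1" using 4 q by simp
          moreover have "real DIM('a) \<ge> 1" using DIM_positive by (simp add: Suc_le_eq)
          ultimately have "- 2 * real DIM('a) + exp (- snd q) < 0" by linarith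
          hence "\<epsilon> * (- 2 * real DIM('a) + exp (- snd q)) < 0" using ep by (simp add: mult_pos_neg)
          hence False using \<open>(\<Sum>b\<in>(Basis::('a\<times>real) set). _) \<ge> 0\<close> \<open>(\<Sum>b\<in>(Basis::('a\<times>real) set). _) = _\<close> by linarith
          thus ?thesis ..
        qed
      qed
      have "(x0, s0) \<in> K" using x0 s0 R closure_subset by (auto simp: K_def)
      hence "z (x0, s0) \<ge> - \<epsilon> * B^2" using qmin zq by force
      moreover have "exp (- s0) \<le> 1" using s0 by simp
      ultimately show "w (x0, s0) \<ge> - \<epsilon> * (B^2 + s0 + 1)"
      proof -
        have eq: "w (x0,s0) = z (x0,s0) - \<delta>* s0 + \<epsilon>*(norm x0^2) - \<epsilon>*exp(-s0)"
          by (simp add: z_def algebra_simps)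
        have "\<epsilon>*(norm x0^2) \<ge> 0" using ep by simp
        moreover have "\<epsilon>*exp(-s0) \<le> \<epsilon> * 1" using ep \<open>exp (- s0) \<le> 1\<close> by (intro mult_left_mono) auto
        moreover have "\<delta>* s0 \<le> \<epsilon>* s0" using dp s0 by (intro mult_right_mono) auto
        moreover have "- \<epsilon> * (B^2 + s0 + 1) = - \<epsilon> * B^2 - \<epsilon>* s0 - \<epsilon>" by (simp add: algebra_simps)
        ultimately show ?thesis using eq \<open>z (x0, s0) \<ge> - \<epsilon> * B^2\<close> by linarith
      qed
    qed
  qed
qed



lemma harm_line:
  assumes "C2_with S A A' A''" "z \<in> S"
  shows "((\<lambda>y. blinfun_apply (A' y) b) has_derivative (\<lambda>h. blinfun_apply (A'' z h) b)) (at z)"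
proof -
  have "(A' has_derivative blinfun_apply (A'' z)) (at z)" using assms by (auto simp: C2_with_def)
  from bounded_linear.has_derivative[OF blinfun.bounded_linear_left[of b] this]
  show ?thesis by simp
qed

lemma MP2:
  fixes H :: "'a::euclidean_space set" and A B :: "'a \<times> real \<Rightarrow> real"
  assumes openH: "open H" and bH: "bounded H"
   and hA: "harmonic_on (H \<times> {0<..}) A" and hB: "harmonic_on (H \<times> {0<..}) B"
   and bA: "bounded (A ` (H \<times> {0<..}))" and bB: "bounded (B ` (H \<times> {0<..}))"
   and cA: "continuous_on (closure (H \<times> {0<..})) A" and cB: "continuous_on (closure (H \<times> {0<..})) B"
   and lat: "\<forall>x\<in>frontier H. \<forall>s\<ge>0. A (x,s) - B (x,s) \<ge> 0"
   and bot: "\<forall>x\<in>H. A (x,0) - B (x,0) \<ge> 0 \<or> (\<exists>D\<le>0. ((\<lambda>t. A (x,t) - B (x,t)) has_real_derivative D) (at 0 within {0..}))"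
  shows "\<forall>x\<in>H. \<forall>s\<ge>0. A (x,s) - B (x,s) \<ge> 0"
proof -
  obtain A' A'' where A: "C2_with (H \<times> {0<..}) A A' A''"
    "\<forall>z\<in>H \<times> {0<..}. (\<Sum>b\<in>Basis. blinfun_apply (blinfun_apply (A'' z) b) b) = 0"
    using hA unfolding harmonic_on_def by blast
  obtain B' B'' where B: "C2_with (H \<times> {0<..}) B B' B''"
    "\<forall>z\<in>H \<times> {0<..}. (\<Sum>b\<in>Basis. blinfun_apply (blinfun_apply (B'' z) b) b) = 0"
    using hB unfolding harmonic_on_def by blast
  show ?thesis
  proof (rule MP[where w = "\<lambda>y. A y - B y" and ?W1.0 = "\<lambda>z h. A' z h - B' z h"
      and ?W2.0 = "\<lambda>z b h. A'' z h b - B'' z h b", OF openH bH])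
    show "\<forall>z\<in>H \<times> {0<..}. ((\<lambda>y. A y - B y) has_derivative (\<lambda>h. A' z h - B' z h)) (at z)"
      using A(1) B(1) by (auto simp: C2_with_def intro!: has_derivative_diff)
    show "\<forall>z\<in>H \<times> {0<..}. \<forall>b\<in>Basis. ((\<lambda>y. A' y b - B' y b) has_derivative (\<lambda>h. A'' z h b - B'' z h b)) (at z)"
      using harm_line[OF A(1)] harm_line[OF B(1)] by (auto intro!: has_derivative_diff)
    show "\<forall>z\<in>H \<times> {0<..}. (\<Sum>b\<in>Basis. A'' z b b - B'' z b b) = 0"
      using A(2) B(2) by (simp add: sum_subtractf)
    show "bounded ((\<lambda>y. A y - B y) ` (H \<times> {0<..}))"
    proof -
      obtain a where a: "\<forall>y\<in>H \<times> {0<..}. norm (A y) \<le> a" using bA by (auto simp: bounded_iff)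
      obtain c where c: "\<forall>y\<in>H \<times> {0<..}. norm (B y) \<le> c" using bB by (auto simp: bounded_iff)
      have "\<forall>y\<in>H \<times> {0<..}. norm (A y - B y) \<le> a + c"
        using a c by (smt (verit) norm_triangle_ineq4)
      thus ?thesis unfolding bounded_iff by blast
    qed
    show "continuous_on (closure (H \<times> {0<..})) (\<lambda>y. A y - B y)"
      using cA cB by (rule continuous_on_diff)
  qed (use lat bot in auto)
qed

lemma ext_unique:
  assumes "open H" "bounded H" "harmonic_ext H \<phi> u v" "harmonic_ext H \<phi> u v'" "x \<in> H" "s \<ge> 0"
  shows "v (x,s) = v' (x,s)"
proof -
  have "\<forall>x\<in>H. \<forall>s\<ge>0. v (x,s) - v' (x,s) \<ge> 0"
    by (rule MP2) (use assms in \<open>auto simp: harmonic_ext_def\<close>)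
  moreover have "\<forall>x\<in>H. \<forall>s\<ge>0. v' (x,s) - v (x,s) \<ge> 0"
    by (rule MP2) (use assms in \<open>auto simp: harmonic_ext_def\<close>)
  ultimately show ?thesis using assms by force
qed

lemma deriv_transfer:
  assumes "open H" "bounded H" "harmonic_ext H \<phi> u v" "harmonic_ext H \<phi> u v'" "x \<in> H"
    "((\<lambda>t. v' (x, t)) has_real_derivative D) (at 0 within {0..})"
  shows "((\<lambda>t. v (x, t)) has_real_derivative D) (at 0 within {0..})"
  using assms(6) unfolding has_field_derivative_def
  by (rule has_derivative_transform_within[where d=1]) (use ext_unique[OF assms(1-2,4,3,5)] in auto)


theorem mainTheorem8:
  fixes H :: "'a::euclidean_space set"
    and \<phi> u1 u2 :: "'a \<Rightarrow> real"
  assumes "open H" and "connected H" and "H \<noteq> {}" and "bounded H"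
    and "C2_on H u1" and "continuous_on (closure H) u1" and "bounded (u1 ` closure H)"
    and "C2_on H u2" and "continuous_on (closure H) u2" and "bounded (u2 ` closure H)"
    and "\<forall>x\<in>frontier H. u1 x = \<phi> x \<and> u2 x = \<phi> x"
    and "\<forall>x\<in>H. \<exists>d1 d2. DtN_has H \<phi> u1 x d1 \<and> DtN_has H \<phi> u2 x d2 \<and> d1 \<le> d2"
  shows "\<forall>x\<in>H. u1 x \<le> u2 x"
proof
  fix x assume x: "x \<in> H"
  obtain d1 d2 V1 V2 where V1: "harmonic_ext H \<phi> u1 V1" and V2: "harmonic_ext H \<phi> u2 V2"
    using assms(12) x unfolding DtN_has_def by blast
  have "\<forall>x\<in>H. \<forall>s\<ge>0. V2 (x,s) - V1 (x,s) \<ge> 0"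
  proof (rule MP2[OF assms(1,4)])
    show "\<forall>x\<in>H. V2 (x,0) - V1 (x,0) \<ge> 0 \<or> (\<exists>D\<le>0. ((\<lambda>t. V2 (x,t) - V1 (x,t)) has_real_derivative D) (at 0 within {0..}))"
    proof (intro ballI disjI2)
      fix y assume y: "y \<in> H"
      obtain e1 e2 W1 W2 where W1: "harmonic_ext H \<phi> u1 W1" "((\<lambda>t. W1 (y, t)) has_real_derivative (- e1)) (at 0 within {0..})"
        and W2: "harmonic_ext H \<phi> u2 W2" "((\<lambda>t. W2 (y, t)) has_real_derivative (- e2)) (at 0 within {0..})"
        and e: "e1 \<le> e2"
        using assms(12) y unfolding DtN_has_def by blast
      have "((\<lambda>t. V2 (y,t) - V1 (y,t)) has_real_derivative (- e2 - - e1)) (at 0 within {0..})"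
        by (rule DERIV_diff deriv_transfer[OF assms(1,4) V2 W2(1) y W2(2)] deriv_transfer[OF assms(1,4) V1 W1(1) y W1(2)])+
      thus "\<exists>D\<le>0. ((\<lambda>t. V2 (y,t) - V1 (y,t)) has_real_derivative D) (at 0 within {0..})"
        using e by (intro exI[of _ "- e2 - - e1"]) auto
    qed
  qed (use V1 V2 assms(11) in \<open>auto simp: harmonic_ext_def\<close>)
  thus "u1 x \<le> u2 x" using x V1 V2 by (force simp: harmonic_ext_def)
qed
end
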